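(* In the setting of the context (FSR scheme with direct flux reconstruction), let $\mathcal{E}_j=(\Phi_{j+1/2}-\Phi_{j-1/2})/h$ evaluated on exact nodal values. If $\kappa_3=\kappa-1$, $\theta=1/3$ and $\theta_3=0$, then as $h\to0$, with derivatives at $x_j$, $$\mathcal{E}_j=\frac{\partial f}{\partial x}-\frac1{30}\frac{\partial^5 f}{\partial x^5}h^4+\frac{\kappa-1}{32}\left[\frac{\partial D}{\partial x}\frac{\partial^5 u}{\partial x^5}+D(u(x_j))\frac{\partial^6 u}{\partial x^6}\right]h^5+O(h^6),$$ where $f$ denotes $f(u(x))$ and $\partial D/\partial x=\frac{d}{dx}D(u(x))$ (fourth-order accuracy).
   Context: Let $h>0$, uniform grid $x_i=ih$, $i\in\mathbb{Z}$. Let $u$ be a smooth real function of $x$, $u_i=u(x_i)$; let $f$ (flux) and $D$ (dissipation coefficient) be smooth real functions of one variable; $f_i=f(u_i)$. For nodal values $g_i$ define successive central differences $(g_x)_i=(g_{i+1}-g_{i-1})/(2h)$, $(g_{xx})_i=((g_x)_{i+1}-(g_x)_{i-1})/(2h)$, and for the face $i+1/2$ with $j=i$, $k=i+1$, define $T_j[g]=\frac h4((g_x)_k-(g_x)_j)-\frac{h^2}{4}(g_{xx})_j$, $T_k[g]=\frac h4((g_x)_k-(g_x)_j)-\frac{h^2}{4}(g_{xx})_k$. Reconstructed solution states (parameters $\kappa,\kappa_3$): $u_L=\kappa\frac{u_j+u_k}{2}+(1-\kappa)[u_j+\frac h2(u_x)_j]+\kappa_3T_j[u]$, $u_R=\kappa\frac{u_j+u_k}{2}+(1-\kappa)[u_k-\frac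 h2(u_x)_k]+\kappa_3T_k[u]$. Reconstructed fluxes (parameters $\theta,\theta_3$): $f_L=\theta\frac{f_j+f_k}{2}+(1-\theta)[f_j+\frac h2(f_x)_j]+\theta_3T_j[f]$, $f_R=\theta\frac{f_j+f_k}{2}+(1-\theta)[f_k-\frac h2(f_x)_k]+\theta_3T_k[f]$. Numerical flux: $\Phi_{i+1/2}=\frac12(f_L+f_R)-\frac12D_{i+1/2}(u_R-u_L)$, with $D_{i+1/2}=\bar D(u_i,u_{i+1})$ for a smooth symmetric $\bar D$ with $\bar D(v,v)=D(v)$. *)

theory Defs
  imports "HOL-Analysis.Analysis" "HOL-Library.Landau_Symbols"
begin

definition smooth1 :: "(real \<Rightarrow> real) \<Rightarrow> bool" where
  "smooth1 g \<longleftrightarrow> (\<forall>n x. ((deriv ^^ n) g) differentiable (at x))"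

definition pd1 :: "(real \<Rightarrow> real \<Rightarrow> real) \<Rightarrow> real \<Rightarrow> real \<Rightarrow> real" where
  "pd1 g = (\<lambda>a b. deriv (\<lambda>s. g s b) a)"
definition pd2 :: "(real \<Rightarrow> real \<Rightarrow> real) \<Rightarrow> real \<Rightarrow> real \<Rightarrow> real" where
  "pd2 g = (\<lambda>a b. deriv (\<lambda>t. g a t) b)"

definition iter_pd :: "bool list \<Rightarrow> (real \<Rightarrow> real \<Rightarrow> real) \<Rightarrow> real \<Rightarrow> real \<Rightarrow> real" where
  "iter_pd ds g = fold (\<lambda>d h. if d then pd1 h else pd2 h) ds g"

definition smooth2 :: "(real \<Rightarrow> real \<Rightarrow> real) \<Rightarrow> bool" where
  "smooth2 g \<longleftrightarrow> (\<forall>ds. continuous_on UNIV (\<lambda>p. iter_pd ds g (fst p) (snd p)) \<and>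
       (\<forall>a b. (\<lambda>s. iter_pd ds g s b) differentiable (at a) \<and>
              (\<lambda>t. iter_pd ds g a t) differentiable (at b)))"

definition cx :: "real \<Rightarrow> (int \<Rightarrow> real) \<Rightarrow> int \<Rightarrow> real" where
  "cx h g i = (g (i+1) - g (i-1)) / (2*h)"
definition cxx :: "real \<Rightarrow> (int \<Rightarrow> real) \<Rightarrow> int \<Rightarrow> real" where
  "cxx h g i = (cx h g (i+1) - cx h g (i-1)) / (2*h)"

text \<open>Third-order correction terms at face i+1/2 (j = i, k = i+1).\<close>
definition Tj :: "real \<Rightarrow> (int \<Rightarrow> real) \<Rightarrow> int \<Rightarrow> real" where
  "Tj h g i = h/4 * (cx h g (i+1) - cx h g i) - h^2/4 * cxx h g i"
definition Tk :: "real \<Rightarrow> (int \<Rightarrow> real) \<Rightarrow> int \<Rightarrow> real" where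
  "Tk h g i = h/4 * (cx h g (i+1) - cx h g i) - h^2/4 * cxx h g (i+1)"

definition recL :: "real \<Rightarrow> real \<Rightarrow> real \<Rightarrow> (int \<Rightarrow> real) \<Rightarrow> int \<Rightarrow> real" where
  "recL k k3 h g i = k * (g i + g (i+1)) / 2 + (1 - k) * (g i + h/2 * cx h g i) + k3 * Tj h g i"
definition recR :: "real \<Rightarrow> real \<Rightarrow> real \<Rightarrow> (int \<Rightarrow> real) \<Rightarrow> int \<Rightarrow> real" where
  "recR k k3 h g i = k * (g i + g (i+1)) / 2 + (1 - k) * (g (i+1) - h/2 * cx h g (i+1)) + k3 * Tk h g i"

definition numflux ::
  "real \<Rightarrow> real \<Rightarrow> real \<Rightarrow> real \<Rightarrow> (real \<Rightarrow> real) \<Rightarrow> (real \<Rightarrow> real \<Rightarrow> real)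
     \<Rightarrow> real \<Rightarrow> (int \<Rightarrow> real) \<Rightarrow> int \<Rightarrow> real" where
  "numflux \<kappa> \<kappa>3 \<theta> \<theta>3 f Dbar h v i =
     (recL \<theta> \<theta>3 h (f \<circ> v) i + recR \<theta> \<theta>3 h (f \<circ> v) i) / 2
     - Dbar (v i) (v (i+1)) / 2 * (recR \<kappa> \<kappa>3 h v i - recL \<kappa> \<kappa>3 h v i)"

definition fsr_E ::
  "real \<Rightarrow> real \<Rightarrow> real \<Rightarrow> real \<Rightarrow> (real \<Rightarrow> real) \<Rightarrow> (real \<Rightarrow> real \<Rightarrow> real)
     \<Rightarrow> (real \<Rightarrow> real) \<Rightarrow> real \<Rightarrow> real \<Rightarrow> real" where
  "fsr_E \<kappa> \<kappa>3 \<theta> \<theta>3 f Dbar u x h =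
     (let v = (\<lambda>i::int. u (x + of_int i * h)) in
      (numflux \<kappa> \<kappa>3 \<theta> \<theta>3 f Dbar h v 0 - numflux \<kappa> \<kappa>3 \<theta> \<theta>3 f Dbar h v (-1)) / h)"

end

theory Submission
  imports Defs
begin


definition sm :: "nat \<Rightarrow> (real \<Rightarrow> real) \<Rightarrow> bool" where
  "sm n g \<longleftrightarrow> (\<forall>m\<le>n. \<forall>x. ((deriv ^^ m) g) differentiable (at x))"

lemma rderiv: "(g::real\<Rightarrow>real) differentiable (at x) \<Longrightarrow> (g has_real_derivative deriv g x) (at x)"
  using DERIV_deriv_iff_real_differentiable by blast

lemma sm_0: "sm 0 g \<longleftrightarrow> (\<forall>x. g differentiable (at x))"
  by (simp add: sm_def)

lemma sm_Suc: "sm (Suc n) g \<longleftrightarrow> (\<forall>x. g differentiable (at x)) \<and> sm n (deriv g)"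
proof -
  have e: "(deriv ^^ Suc m) g = (deriv ^^ m) (deriv g)" for m
    by (simp add: funpow_Suc_right del: funpow.simps)
  show ?thesis
    unfolding sm_def
    apply (rule iffI)
     apply (metis e Suc_le_mono funpow_0 id_apply zero_le)
    by (metis e Suc_le_mono funpow_0 id_apply not0_implies_Suc)
qed

lemma sm_mono: "sm (Suc n) g \<Longrightarrow> sm n g"
  by (simp add: sm_def)

lemma smooth1_sm: "smooth1 g \<Longrightarrow> sm n g"
  by (simp add: sm_def smooth1_def)

lemma sm_diff: "sm n g \<Longrightarrow> g differentiable (at x)"
  by (metis funpow_0 le0 sm_def)

lemma deriv_add_fun: "(\<And>x. g differentiable (at x)) \<Longrightarrow> (\<And>x. h differentiable (at x)) \<Longrightarrow>
   deriv (\<lambda>x. g x + h x) = (\<lambda>x. deriv g x + deriv h (x::real))"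
proof -
  assume a: "\<And>x. g differentiable (at x)" "\<And>x. h differentiable (at x)"
  note dg = rderiv[OF a(1)] and dh = rderiv[OF a(2)]
  show ?thesis by (rule ext, rule DERIV_imp_deriv, auto intro!: derivative_eq_intros dg dh)
qed

lemma deriv_mult_fun: "(\<And>x. g differentiable (at x)) \<Longrightarrow> (\<And>x. h differentiable (at x)) \<Longrightarrow>
   deriv (\<lambda>x. g x * h x) = (\<lambda>x. deriv g x * h x + g x * deriv h (x::real))"
proof -
  assume a: "\<And>x. g differentiable (at x)" "\<And>x. h differentiable (at x)"
  note dg = rderiv[OF a(1)] and dh = rderiv[OF a(2)]
  show ?thesis by (rule ext, rule DERIV_imp_deriv, auto intro!: derivative_eq_intros dg dh)
qed

lemma deriv_comp_fun: "(\<And>x. g differentiable (at x)) \<Longrightarrow> (\<And>x. h differentiable (at x)) \<Longrightarrow>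
   deriv (g \<circ> h) = (\<lambda>x. deriv g (h x) * deriv h (x::real))"
  by (rule ext, rule real_derivative_chain, auto)

lemma sm_add: "sm n g \<Longrightarrow> sm n h \<Longrightarrow> sm n (\<lambda>x. g x + h x)"
proof (induction n arbitrary: g h)
  case 0 thus ?case by (simp add: sm_0)
next
  case (Suc n)
  then show ?case
    by (simp add: sm_Suc deriv_add_fun)
qed

lemma sm_mult: "sm n g \<Longrightarrow> sm n h \<Longrightarrow> sm n (\<lambda>x. g x * h x)"
proof (induction n arbitrary: g h)
  case 0 thus ?case by (simp add: sm_0)
next
  case (Suc n)
  have g: "\<And>x. g differentiable (at x)" and h: "\<And>x. h differentiable (at x)"
    using Suc.prems by (auto simp: sm_Suc)
  have "sm n (\<lambda>x. deriv g x * h x + g x * deriv h x)"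
    using Suc by (intro sm_add Suc.IH) (auto simp: sm_Suc intro: sm_mono)
  then show ?case using g h
    by (simp add: sm_Suc deriv_mult_fun)
qed

lemma sm_comp: "sm n g \<Longrightarrow> sm n h \<Longrightarrow> sm n (g \<circ> h)"
proof (induction n arbitrary: g h)
  case 0 thus ?case unfolding sm_0 by (metis differentiable_chain_at)
next
  case (Suc n)
  have g: "\<And>x. g differentiable (at x)" and h: "\<And>x. h differentiable (at x)"
    using Suc.prems by (auto simp: sm_Suc)
  have "sm n ((deriv g) \<circ> h)"
    using Suc by (intro Suc.IH) (auto simp: sm_Suc intro: sm_mono)
  hence "sm n (\<lambda>x. deriv g (h x) * deriv h x)"
    using Suc by (intro sm_mult) (auto simp: sm_Suc o_def)
  moreover have "\<And>x. (g \<circ> h) differentiable (at x)" using g h by (metis differentiable_chain_at)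
  ultimately show ?case using g h unfolding sm_Suc deriv_comp_fun[OF g h] by blast
qed




lemma iter_pd_snoc: "iter_pd (ds @ [d]) g = (if d then pd1 (iter_pd ds g) else pd2 (iter_pd ds g))"
  by (simp add: iter_pd_def)

lemma higher_deriv_Dbar: "(deriv^^n) (\<lambda>t. G a t) = (\<lambda>t. iter_pd (replicate n False) G a t)"
proof (induction n)
  case 0 then show ?case by (simp add: iter_pd_def)
next
  case (Suc n)
  have "(deriv^^Suc n) (\<lambda>t. G a t) = deriv ((deriv^^n) (\<lambda>t. G a t))" by simp
  also have "\<dots> = (\<lambda>t. iter_pd (replicate n False @ [False]) G a t)"
    unfolding Suc iter_pd_snoc by (simp add: pd2_def)
  finally show ?case by (simp add: replicate_append_same)
qed

lemma smooth2_sm: "smooth2 G \<Longrightarrow> sm n (\<lambda>t. G a t)"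
  unfolding sm_def smooth2_def higher_deriv_Dbar by blast

lemma pd_sym: assumes "\<And>a b. G a b = G b a" shows "pd1 G a a = pd2 G a a"
  unfolding pd1_def pd2_def by (subst assms) (rule refl)





lemma diag_deriv:
  assumes s: "smooth2 G"
  shows "((\<lambda>t. G t t) has_real_derivative (pd1 G a a + pd2 G a a)) (at a)"
proof -
  have d1: "((\<lambda>s. G s a) has_derivative (*) (pd1 G a a)) (at a within UNIV)"
  proof -
    have "(\<lambda>s. iter_pd [] G s a) differentiable (at a)" using s unfolding smooth2_def by blast
    hence "(\<lambda>s. G s a) differentiable (at a)" by (simp add: iter_pd_def)
    thus ?thesis using rderiv has_field_derivative_def pd1_def by metis
  qed
  have d2: "((\<lambda>y. G x y) has_derivative blinfun_apply (blinfun_mult_right (pd2 G x y))) (at y within UNIV)" for x y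
  proof -
    have "(\<lambda>t. iter_pd [] G x t) differentiable (at y)" using s unfolding smooth2_def by blast
    hence "(\<lambda>t. G x t) differentiable (at y)" by (simp add: iter_pd_def)
    hence "((\<lambda>t. G x t) has_field_derivative pd2 G x y) (at y)" using rderiv pd2_def by metis
    thus ?thesis by (simp add: has_field_derivative_def)
  qed
  have c: "continuous_on UNIV (\<lambda>p. pd2 G (fst p) (snd p))"
  proof -
    have "iter_pd [False] G = pd2 G" by (simp add: iter_pd_def)
    moreover have "continuous_on UNIV (\<lambda>p. iter_pd [False] G (fst p) (snd p))"
      using s unfolding smooth2_def by blast
    ultimately show ?thesis by simp
  qed
  have c2: "continuous (at (a, a) within UNIV \<times> UNIV) (\<lambda>(x, y). blinfun_mult_right (pd2 G x y))"
  proof -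
    have "continuous (at (a, a)) (\<lambda>p. pd2 G (fst p) (snd p))"
      using c by (simp add: continuous_on_eq_continuous_at)
    hence "continuous (at (a, a)) (\<lambda>p. blinfun_mult_right (pd2 G (fst p) (snd p)))"
      by (rule bounded_linear.continuous[OF bounded_linear_blinfun_mult_right])
    thus ?thesis by (simp add: case_prod_unfold)
  qed
  have j: "((\<lambda>(x, y). G x y) has_derivative (\<lambda>(tx, ty). pd1 G a a * tx + blinfun_mult_right (pd2 G a a) ty)) (at (a, a) within UNIV \<times> UNIV)"
    using has_derivative_partialsI[OF d1 d2 c2] by simp
  have dg: "((\<lambda>t. (t, t)) has_derivative (\<lambda>t. (t, t))) (at a)"
    by (intro derivative_eq_intros) auto
  have "(((\<lambda>(x, y). G x y) \<circ> (\<lambda>t. (t, t))) has_derivative ((\<lambda>(tx, ty). pd1 G a a * tx + blinfun_mult_right (pd2 G a a) ty) \<circ> (\<lambda>t. (t, t)))) (at a)"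
    by (rule diff_chain_at[OF dg]) (use j in simp)
  moreover have "((\<lambda>(x, y). G x y) \<circ> (\<lambda>t. (t, t))) = (\<lambda>t. G t t)" by (simp add: o_def)
  moreover have "((\<lambda>(tx, ty). pd1 G a a * tx + blinfun_mult_right (pd2 G a a) ty) \<circ> (\<lambda>t. (t, t))) = (*) (pd1 G a a + pd2 G a a)"
    by (simp add: o_def fun_eq_iff algebra_simps)
  ultimately show ?thesis by (simp add: has_field_derivative_def)
qed




lemma taylor_bigo:
  assumes sm: "sm n g" and n: "n > 0"
  shows "(\<lambda>h. g (x + c*h) - (\<Sum>m<n. (deriv^^m) g x / fact m * (c*h)^m)) \<in> O[at_right 0](\<lambda>h. h^n)"
proof (cases "c = 0")
  case True
  obtain k where k: "n = Suc k" using n by (metis gr0_implies_Suc)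
  show ?thesis using True unfolding k sum.lessThan_Suc_shift by simp
next
  case False
  define a where "a = x - \<bar>c\<bar>"
  define b where "b = x + \<bar>c\<bar>"
  have cont: "continuous_on {a..b} ((deriv^^n) g)"
    using sm unfolding sm_def
    by (meson differentiable_imp_continuous_on differentiable_on_def order_refl differentiable_at_withinI)
  obtain M where M: "\<And>t. t \<in> {a..b} \<Longrightarrow> \<bar>(deriv^^n) g t\<bar> \<le> M"
    using compact_continuous_image[OF cont compact_Icc] compact_imp_bounded bounded_iff
    by (metis image_eqI real_norm_def)
  have ev: "eventually (\<lambda>h::real. 0 < h \<and> h < 1) (at_right 0)"
    by (simp add: eventually_at_right_field) (meson zero_less_one)
  show ?thesis
  proof (rule bigoI[where c = "\<bar>M\<bar> / fact n * \<bar>c\<bar>^n"])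
    show "eventually (\<lambda>h. norm (g (x + c*h) - (\<Sum>m<n. (deriv^^m) g x / fact m * (c*h)^m))
           \<le> \<bar>M\<bar> / fact n * \<bar>c\<bar>^n * norm (h^n)) (at_right 0)"
      using ev
    proof eventually_elim
      case (elim h)
      have "\<exists>t. (if x + c*h < x then x + c*h < t \<and> t < x else x < t \<and> t < x + c*h) \<and>
         g (x + c*h) = (\<Sum>m<n. ((deriv^^m) g x / fact m) * (x + c*h - x)^m) + ((deriv^^n) g t / fact n) * (x + c*h - x)^n"
      proof (rule Taylor[where a = a and b = b])
        show "\<forall>m t. m < n \<and> a \<le> t \<and> t \<le> b \<longrightarrow> DERIV ((deriv^^m) g) t :> (deriv^^(Suc m)) g t"
          using sm unfolding sm_def by (auto intro!: rderiv)
        have "\<bar>c*h\<bar> \<le> \<bar>c\<bar>" using elim by (simp add: abs_mult mult_left_le)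
        thus "a \<le> x + c * h" "x + c * h \<le> b" unfolding a_def b_def by linarith+
        show "x + c * h \<noteq> x" using elim False by simp
      qed (use n in \<open>auto simp: a_def b_def\<close>)
      moreover have "\<bar>c*h\<bar> \<le> \<bar>c\<bar>" using elim by (simp add: abs_mult mult_left_le)
      ultimately obtain t where t0: "(if x + c*h < x then x + c*h < t \<and> t < x else x < t \<and> t < x + c*h)"
        and eq0: "g (x + c*h) = (\<Sum>m<n. ((deriv^^m) g x / fact m) * (x + c*h - x)^m) + ((deriv^^n) g t / fact n) * (x + c*h - x)^n"
        and cc: "\<bar>c*h\<bar> \<le> \<bar>c\<bar>" by blast
      have t: "t \<in> {a..b}" using t0 cc unfolding a_def b_def by (auto split: if_splits)
      have eq: "g (x + c*h) = (\<Sum>m<n. ((deriv^^m) g x / fact m) * (c*h)^m) + ((deriv^^n) g t / fact n) * (c*h)^n"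
        using eq0 by simp
      have "norm (g (x + c*h) - (\<Sum>m<n. (deriv^^m) g x / fact m * (c*h)^m)) = \<bar>(deriv^^n) g t\<bar> / fact n * \<bar>c\<bar>^n * \<bar>h\<bar>^n"
        using eq by (simp add: abs_mult power_abs power_mult_distrib)
      also have "\<dots> \<le> \<bar>M\<bar> / fact n * \<bar>c\<bar>^n * \<bar>h\<bar>^n"
        using M[OF t] by (intro mult_right_mono divide_right_mono) auto
      finally show ?case by (simp add: power_abs)
    qed
  qed
qed




lemma numflux_eq:
  assumes h: "h \<noteq> 0"
  shows "numflux \<kappa> (\<kappa>-1) (1/3) 0 f Dbar h v i =
    (f (v i) + f (v (i+1)))/2 - (f (v (i+2)) - f (v (i+1)) - f (v i) + f (v (i-1)))/12
    - Dbar (v i) (v (i+1)) / 2 * (1-\<kappa>) *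
      ((- v (i-2) + 5 * v (i-1) - 10 * v i + 10 * v (i+1) - 5 * v (i+2) + v (i+3))/16)"
proof -
  have e: "i + 1 + 1 = i + 2" "i + 1 - 1 = i" "i - 1 + 1 = i" "i - 1 - 1 = i - 2" "i + 2 + 1 = i + 3"
    "i + 1 + 1 + 1 = i + 3" "i + 1 + 1 - 1 = i + 1" "i + 1 - 1 + 1 = i + 1" "i - 1 + 1 + 1 = i + 1"
    "i + 1 - 1 - 1 = i - 1" "i - 1 + 1 - 1 = i - 1" "i - 1 - 1 + 1 = i - 1" by simp_all
  show ?thesis
    unfolding numflux_def recL_def recR_def Tj_def Tk_def cxx_def cx_def o_def e
    using h by (simp add: field_simps power2_eq_square)
qed




lemma fsrE_eq:
  assumes h: "h \<noteq> 0"
  shows "fsr_E \<kappa> (\<kappa>-1) (1/3) 0 f Dbar u x h =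
   ((((f (u (x + 0*h)) + f (u (x + 1*h)))/2 - (f (u (x + 2*h)) - f (u (x + 1*h)) - f (u (x + 0*h)) + f (u (x + (-1)*h)))/12)
      - Dbar (u (x + 0*h)) (u (x + 1*h)) / 2 * (1-\<kappa>) *
        ((- u (x + (-2)*h) + 5 * u (x + (-1)*h) - 10 * u (x + 0*h) + 10 * u (x + 1*h) - 5 * u (x + 2*h) + u (x + 3*h))/16))
    - (((f (u (x + (-1)*h)) + f (u (x + 0*h)))/2 - (f (u (x + 1*h)) - f (u (x + 0*h)) - f (u (x + (-1)*h)) + f (u (x + (-2)*h)))/12)
      - Dbar (u (x + (-1)*h)) (u (x + 0*h)) / 2 * (1-\<kappa>) *
        ((- u (x + (-3)*h) + 5 * u (x + (-2)*h) - 10 * u (x + (-1)*h) + 10 * u (x + 0*h) - 5 * u (x + 1*h) + u (x + 2*h))/16))) / h"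
  unfolding fsr_E_def Let_def numflux_eq[OF h] o_def
  by simp




abbreviation Oh :: "nat \<Rightarrow> (real \<Rightarrow> real) set" where
  "Oh n \<equiv> O[at_right 0](\<lambda>h. h^n)"

lemma bo_add: "f \<in> Oh n \<Longrightarrow> g \<in> Oh n \<Longrightarrow> (\<lambda>h. f h + g h) \<in> Oh n"
  by (rule sum_in_bigo)
lemma bo_diff: "f \<in> Oh n \<Longrightarrow> g \<in> Oh n \<Longrightarrow> (\<lambda>h. f h - g h) \<in> Oh n"
  by (rule sum_in_bigo)
lemma bo_cmult: "f \<in> Oh n \<Longrightarrow> (\<lambda>h. c * f h) \<in> Oh n"
  using landau_o.big.mult[OF bigo_const[of c] , of f "at_right 0" "\<lambda>h. h^n"] by simp
lemma bo_mult: "f \<in> Oh a \<Longrightarrow> g \<in> Oh b \<Longrightarrow> (\<lambda>h. f h * g h) \<in> Oh (a+b)"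
  using landau_o.big.mult[of f "at_right 0" "\<lambda>h. h^a" g "\<lambda>h. h^b"] by (simp add: power_add)
lemma bo_mono: "a \<le> b \<Longrightarrow> (\<lambda>h. h^b) \<in> Oh a"
proof (rule bigoI[where c=1])
  assume ab: "a \<le> b"
  have ev: "eventually (\<lambda>h::real. 0 < h \<and> h < 1) (at_right 0)"
    by (simp add: eventually_at_right_field) (meson zero_less_one)
  show "eventually (\<lambda>h. norm (h^b) \<le> 1 * norm ((h::real)^a)) (at_right 0)"
    using ev by eventually_elim (simp add: power_decreasing ab)
qed
lemma bo_trans: "f \<in> Oh b \<Longrightarrow> a \<le> b \<Longrightarrow> f \<in> Oh a"
  using landau_o.big_trans bo_mono by blast
lemma bo_pow: "(\<lambda>h. c * h^n) \<in> Oh n"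
  by (rule bo_cmult) simp
lemma bo_const: "(\<lambda>h. c) \<in> Oh 0"
  by simp
lemma bo_div: assumes f: "f \<in> Oh (Suc n)" shows "(\<lambda>h. f h / h) \<in> Oh n"
proof -
  obtain c where c: "eventually (\<lambda>h. norm (f h) \<le> c * norm (h^Suc n)) (at_right 0)"
    using landau_o.bigE[OF f] by blast
  have ev: "eventually (\<lambda>h::real. 0 < h) (at_right 0)"
    by (simp add: eventually_at_right_field) (meson zero_less_one)
  show ?thesis
  proof (rule bigoI[where c=c])
    show "eventually (\<lambda>h. norm (f h / h) \<le> c * norm (h^n)) (at_right 0)"
      using c ev
    proof eventually_elim
      case (elim h)
      have "norm (f h / h) = \<bar>f h\<bar> / h" using elim(2) by (simp add: abs_divide)
      also have "\<dots> \<le> c * \<bar>h\<bar>^Suc n / h"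
        using elim by (intro divide_right_mono) (simp_all add: power_abs)
      also have "\<dots> = c * norm (h^n)" using elim(2) by (simp add: power_abs)
      finally show ?case .
    qed
  qed
qed




lemma sum7: "(\<Sum>m<7. a m / fact m * (y::real)^m) = a 0 + a 1 * y + a 2/2 * y^2 + a 3/6*y^3 + a 4/24*y^4 + a 5/120*y^5 + a 6/720*y^6"
  by (simp add: numeral_eq_Suc lessThan_Suc fact_Suc)

lemma sum2: "(\<Sum>m<2. a m / fact m * (y::real)^m) = a 0 + a 1 * y"
  by (simp add: numeral_eq_Suc lessThan_Suc)




lemma bo_divc: "f \<in> Oh n \<Longrightarrow> (\<lambda>h. f h / c) \<in> Oh n"
  using bo_cmult[of f n "1/c"] by simp
lemma bo_lin: "(\<lambda>h. a + b * h) \<in> Oh 0"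
  using bo_add[OF bo_const bo_trans[OF bo_pow[of b 1] le0]] by simp
lemma bo_56: "(\<lambda>h. a * h^5 + b * h^6) \<in> Oh 5"
  by (intro bo_add bo_pow bo_trans[OF bo_pow[of b 6]]) simp
lemma dummy_ev: "True" by simp
lemma ev_pos: "eventually (\<lambda>h::real. h \<noteq> 0) (at_right 0)"
  by (simp add: eventually_at_right_field) (meson zero_less_one less_irrefl)

theorem mainTheorem3:
  fixes u f D :: "real \<Rightarrow> real" and Dbar :: "real \<Rightarrow> real \<Rightarrow> real"
    and \<kappa> \<kappa>3 \<theta> \<theta>3 x :: real
  assumes "smooth1 u" and "smooth1 f" and "smooth1 D" and "smooth2 Dbar"
    and "\<And>a b. Dbar a b = Dbar b a" and "\<And>v. Dbar v v = D v"
    and "\<kappa>3 = \<kappa> - 1" and "\<theta> = 1/3" and "\<theta>3 = 0"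
  shows "(\<lambda>h. fsr_E \<kappa> \<kappa>3 \<theta> \<theta>3 f Dbar u x h
           - (deriv (f \<circ> u) x
              - 1/30 * (deriv ^^ 5) (f \<circ> u) x * h^4
              + (\<kappa> - 1)/32 * (deriv (D \<circ> u) x * (deriv ^^ 5) u x
                               + D (u x) * (deriv ^^ 6) u x) * h^5))
         \<in> O[at_right 0](\<lambda>h. h^6)"
proof -
  note sym = assms(5)
  define G where "G = f \<circ> u"
  have smu: "sm n u" for n using assms(1) by (rule smooth1_sm)
  have smG: "sm 7 G" unfolding G_def using assms(2) by (intro sm_comp smu smooth1_sm)
  define psi where "psi = (\<lambda>t. Dbar (u x) t) \<circ> u"
  have smpsi: "sm 2 psi" unfolding psi_def using assms(4) by (intro sm_comp smu smooth2_sm)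
  define g where "g m = (deriv^^m) G x" for m
  define w where "w m = (deriv^^m) u x" for m
  define p0 where "p0 = psi x"
  define p1 where "p1 = deriv psi x"
  define RF where "RF c h = G (x + c*h) - (\<Sum>m<7. g m / fact m * (c*h)^m)" for c h
  define RU where "RU c h = u (x + c*h) - (\<Sum>m<7. w m / fact m * (c*h)^m)" for c h
  define RB where "RB c h = psi (x + c*h) - (\<Sum>m<2. (deriv^^m) psi x / fact m * (c*h)^m)" for c h
  have RF: "RF c \<in> Oh 7" for c
    unfolding RF_def g_def using taylor_bigo[OF smG, of x c] by simp
  have RU: "RU c \<in> Oh 7" for c
    unfolding RU_def w_def using taylor_bigo[OF smu, of 7 x c] by simp
  have RB: "RB c \<in> Oh 2" for c
    unfolding RB_def using taylor_bigo[OF smpsi, of x c] by simp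
  have RFe: "RF c h = G (x + c*h) - (g 0 + g 1 * (c*h) + g 2/2 * (c*h)^2 + g 3/6*(c*h)^3 + g 4/24*(c*h)^4 + g 5/120*(c*h)^5 + g 6/720*(c*h)^6)" for c h
    unfolding RF_def sum7 ..
  have RUe: "RU c h = u (x + c*h) - (w 0 + w 1 * (c*h) + w 2/2 * (c*h)^2 + w 3/6*(c*h)^3 + w 4/24*(c*h)^4 + w 5/120*(c*h)^5 + w 6/720*(c*h)^6)" for c h
    unfolding RU_def sum7 ..
  have RBe: "RB c h = psi (x + c*h) - (p0 + p1 * (c*h))" for c h
    unfolding RB_def sum2 p0_def p1_def by simp

  define FE where "FE h = (RF (-2) h - 8 * RF (-1) h + 8 * RF 1 h - RF 2 h)/12" for h
  have FE: "FE \<in> Oh 7" unfolding FE_def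
    by (intro bo_divc bo_add bo_diff bo_cmult RF)
  define Fl0 where "Fl0 h = (f (u (x + 0*h)) + f (u (x + 1*h)))/2 - (f (u (x + 2*h)) - f (u (x + 1*h)) - f (u (x + 0*h)) + f (u (x + (-1)*h)))/12" for h
  define Fl1 where "Fl1 h = (f (u (x + (-1)*h)) + f (u (x + 0*h)))/2 - (f (u (x + 1*h)) - f (u (x + 0*h)) - f (u (x + (-1)*h)) + f (u (x + (-2)*h)))/12" for h
  have Fl: "Fl0 h - Fl1 h = h * g 1 - h^5 * g 5 / 30 + FE h" for h
    unfolding Fl0_def Fl1_def FE_def RFe G_def o_def by (simp add: power_mult_distrib field_simps)

  define W0 where "W0 h = ((- u (x + (-2)*h) + 5 * u (x + (-1)*h) - 10 * u (x + 0*h) + 10 * u (x + 1*h) - 5 * u (x + 2*h) + u (x + 3*h))/16)" for h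
  define W1 where "W1 h = ((- u (x + (-3)*h) + 5 * u (x + (-2)*h) - 10 * u (x + (-1)*h) + 10 * u (x + 0*h) - 5 * u (x + 1*h) + u (x + 2*h))/16)" for h
  define SW0 where "SW0 h = (- RU (-2) h + 5 * RU (-1) h - 10 * RU 0 h + 10 * RU 1 h - 5 * RU 2 h + RU 3 h)/16" for h
  define SW1 where "SW1 h = (- RU (-3) h + 5 * RU (-2) h - 10 * RU (-1) h + 10 * RU 0 h - 5 * RU 1 h + RU 2 h)/16" for h
  have SW0: "SW0 \<in> Oh 7" unfolding SW0_def
    by (intro bo_divc bo_add bo_diff bo_cmult RU) (simp add: RU)
  have SW1: "SW1 \<in> Oh 7" unfolding SW1_def
    by (intro bo_divc bo_add bo_diff bo_cmult RU) (simp add: RU)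
  have W0e: "W0 h = w 5 / 16 * h^5 + w 6 / 32 * h^6 + SW0 h" for h
    unfolding W0_def SW0_def RUe by (simp add: power_mult_distrib field_simps)
  have W1e: "W1 h = w 5 / 16 * h^5 + (- w 6 / 32) * h^6 + SW1 h" for h
    unfolding W1_def SW1_def RUe by (simp add: power_mult_distrib field_simps)
  have W0: "W0 \<in> Oh 5" unfolding W0e
    by (intro bo_add bo_56 bo_trans[OF SW0]) simp
  have W1: "W1 \<in> Oh 5" unfolding W1e
    by (intro bo_add bo_56 bo_trans[OF SW1]) simp

  have B0: "Dbar (u (x + 0*h)) (u (x + 1*h)) = p0 + p1 * h + RB 1 h" for h
    unfolding RBe psi_def by simp
  have B1: "Dbar (u (x + (-1)*h)) (u (x + 0*h)) = p0 - p1 * h + RB (-1) h" for h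
    unfolding RBe psi_def by (simp add: sym[of "u (x - h)"])

  define X where "X h = (p0 + p1 * h) * SW0 h - (p0 + (-p1) * h) * SW1 h + RB 1 h * W0 h - RB (-1) h * W1 h" for h
  have X: "X \<in> Oh 7"
  proof -
    have a: "(\<lambda>h. (p0 + p1 * h) * SW0 h) \<in> Oh 7" using bo_mult[OF bo_lin[of p0 p1] SW0] by simp
    have b: "(\<lambda>h. (p0 + (-p1) * h) * SW1 h) \<in> Oh 7" using bo_mult[OF bo_lin[of p0 "-p1"] SW1] by simp
    have c: "(\<lambda>h. RB 1 h * W0 h) \<in> Oh 7" using bo_mult[OF RB W0] by simp
    have d: "(\<lambda>h. RB (-1) h * W1 h) \<in> Oh 7" using bo_mult[OF RB W1] by simp
    show ?thesis unfolding X_def by (intro bo_add bo_diff a b c d)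
  qed

  have dfu: "deriv (f \<circ> u) x = g 1" and d5fu: "(deriv ^^ 5) (f \<circ> u) x = g 5"
    unfolding g_def G_def by (simp only: One_nat_def funpow.simps o_apply id_apply) (rule refl)
  have Du: "D (u x) = p0" unfolding p0_def psi_def by (simp add: assms(6))
  have dpsi: "p1 = pd2 Dbar (u x) (u x) * deriv u x"
    unfolding p1_def psi_def pd2_def
    by (rule real_derivative_chain) (use smu sm_diff smooth2_sm assms(4) in blast)+
  have dD: "deriv (D \<circ> u) x = 2 * p1"
  proof -
    have Deq: "D = (\<lambda>t. Dbar t t)" using assms(6) by (simp add: fun_eq_iff)
    have "(D has_real_derivative (pd1 Dbar (u x) (u x) + pd2 Dbar (u x) (u x))) (at (u x))"
      unfolding Deq by (rule diag_deriv[OF assms(4)])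
    hence "deriv (D \<circ> u) x = (pd1 Dbar (u x) (u x) + pd2 Dbar (u x) (u x)) * deriv u x"
      using real_derivative_chain[of u x D] DERIV_imp_deriv smu sm_diff
      by (metis real_differentiable_def)
    thus ?thesis unfolding dpsi pd_sym[OF sym] by simp
  qed

  define Lf where "Lf = (\<lambda>h. fsr_E \<kappa> \<kappa>3 \<theta> \<theta>3 f Dbar u x h
           - (deriv (f \<circ> u) x
              - 1/30 * (deriv ^^ 5) (f \<circ> u) x * h^4
              + (\<kappa> - 1)/32 * (deriv (D \<circ> u) x * (deriv ^^ 5) u x
                               + D (u x) * (deriv ^^ 6) u x) * h^5))"
  define Rf where "Rf = (\<lambda>h. (FE h - (1-\<kappa>)/2 * X h) / h)"
  have main: "Lf h = Rf h" if h: "h \<noteq> 0" for h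
  proof -
    define Bz where "Bz = Dbar (u (x + 0*h)) (u (x + 1*h))"
    define Bm where "Bm = Dbar (u (x + (-1)*h)) (u (x + 0*h))"
    define Tg where "Tg = g 1 - 1/30 * g 5 * h^4 + (\<kappa> - 1)/32 * (2 * p1 * w 5 + p0 * w 6) * h^5"
    have E: "fsr_E \<kappa> \<kappa>3 \<theta> \<theta>3 f Dbar u x h = ((Fl0 h - Bz / 2 * (1-\<kappa>) * W0 h) - (Fl1 h - Bm / 2 * (1-\<kappa>) * W1 h)) / h"
      unfolding assms(7-9) fsrE_eq[OF h] Fl0_def Fl1_def W0_def W1_def Bz_def Bm_def ..
    have n1: "(Fl0 h - Bz / 2 * (1-\<kappa>) * W0 h) - (Fl1 h - Bm / 2 * (1-\<kappa>) * W1 h)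
        = (Fl0 h - Fl1 h) - (1-\<kappa>)/2 * (Bz * W0 h - Bm * W1 h)" by (simp add: algebra_simps)
    have n2: "(h * g 1 - h^5 * g 5 / 30 + FE h) - (1-\<kappa>)/2 * ((p0 + p1 * h + RB 1 h) * W0 h - (p0 - p1 * h + RB (-1) h) * W1 h)
        = h * Tg + (FE h - (1-\<kappa>)/2 * X h)"
      unfolding X_def W0e W1e Tg_def by (simp add: field_simps eval_nat_numeral)
    have L: "Lf h = ((Fl0 h - Bz / 2 * (1-\<kappa>) * W0 h) - (Fl1 h - Bm / 2 * (1-\<kappa>) * W1 h)) / h - Tg"
      unfolding Lf_def E Tg_def dfu d5fu Du dD w_def[symmetric] ..
    have aux: "(h * T + Q) / h - T = Q / h" for T Q using h by (simp add: field_simps)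
    have "Lf h = ((Fl0 h - Fl1 h) - (1-\<kappa>)/2 * (Bz * W0 h - Bm * W1 h))/h - Tg" unfolding L n1 ..
    also have "\<dots> = ((h * g 1 - h^5 * g 5 / 30 + FE h) - (1-\<kappa>)/2 * ((p0 + p1 * h + RB 1 h) * W0 h - (p0 - p1 * h + RB (-1) h) * W1 h))/h - Tg"
      unfolding Fl Bz_def Bm_def B0 B1 ..
    also have "\<dots> = (h * Tg + (FE h - (1-\<kappa>)/2 * X h))/h - Tg" unfolding n2 ..
    also have "\<dots> = Rf h" unfolding aux Rf_def ..
    finally show ?thesis .
  qed
  have ev: "eventually (\<lambda>h. Lf h = Rf h) (at_right 0)"
    using ev_pos by (rule eventually_mono) (rule main)
  have "Rf \<in> Oh 6"
  proof -
    have "(\<lambda>h. FE h - (1-\<kappa>)/2 * X h) \<in> Oh 7" by (intro bo_diff bo_cmult FE X)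
    moreover have "Suc 6 = (7::nat)" by simp
    ultimately show ?thesis unfolding Rf_def using bo_div[of _ 6] by metis
  qed
  hence "Lf \<in> Oh 6" using landau_o.big.in_cong[OF ev] by blast
  thus ?thesis unfolding Lf_def .
qed


end
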